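(* For all integers $d\geq 1$, $C_d=W_d$.
   Context: Every Boolean function $f:\{0,1\}^n\to\{0,1\}$ has a unique multilinear representation $f=\sum_{S\subseteq[n]}a_S\prod_{i\in S}x_i$ over $\mathbb{R}$ agreeing with $f$ on $\{0,1\}^n$; $\deg(f)$ is the degree of this representation. A variable $x_i$ is relevant if it appears in a monomial with nonzero coefficient; $R(f)$ is the number of relevant variables. $R_d$ is the maximum of $R(f)$ over Boolean functions of degree at most $d$, and $C_d=R_d2^{-d}$. For a relevant variable $x_i$, $\deg_i(f)$ is the maximum of $|S|$ over sets $S\ni i$ with $a_S\neq 0$, and $w_i(f)=2^{-\deg_i(f)}$ (for irrelevant variables, $w_i(f)=0$). The weight of $f$ is $W(f)=\sum_i w_i(f)$, and $W_d$ is the maximum of $W(f)$ over all Boolean functions $f$ of degree at most $d$. *)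

theory Defs
  imports Complex_Main "HOL-Library.Extended_Real"
begin

text \<open>A Boolean function on n variables is f :: nat set \<Rightarrow> bool, where an input
  x \<in> {0,1}^n is encoded as the set of coordinates equal to 1 (a subset of {..<n}).
  Only the values on subsets of {..<n} matter.\<close>

definition mcoeff :: "nat \<Rightarrow> (nat set \<Rightarrow> bool) \<Rightarrow> nat set \<Rightarrow> real" where
  "mcoeff n f = (THE a. (\<forall>S. \<not> S \<subseteq> {..<n} \<longrightarrow> a S = 0) \<and>
      (\<forall>x. x \<subseteq> {..<n} \<longrightarrow>
         of_bool (f x) = (\<Sum>S\<in>Pow {..<n}. a S * (\<Prod>i\<in>S. of_bool (i \<in> x)))))"

definition bdeg :: "nat \<Rightarrow> (nat set \<Rightarrow> bool) \<Rightarrow> nat" where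
  "bdeg n f = Max (insert 0 {card S | S. S \<subseteq> {..<n} \<and> mcoeff n f S \<noteq> 0})"

definition relevant :: "nat \<Rightarrow> (nat set \<Rightarrow> bool) \<Rightarrow> nat \<Rightarrow> bool" where
  "relevant n f i = (\<exists>S. S \<subseteq> {..<n} \<and> i \<in> S \<and> mcoeff n f S \<noteq> 0)"

definition numrel :: "nat \<Rightarrow> (nat set \<Rightarrow> bool) \<Rightarrow> nat" where
  "numrel n f = card {i. i < n \<and> relevant n f i}"

definition deg_i :: "nat \<Rightarrow> (nat set \<Rightarrow> bool) \<Rightarrow> nat \<Rightarrow> nat" where
  "deg_i n f i = Max {card S | S. S \<subseteq> {..<n} \<and> i \<in> S \<and> mcoeff n f S \<noteq> 0}"

definition wt_i :: "nat \<Rightarrow> (nat set \<Rightarrow> bool) \<Rightarrow> nat \<Rightarrow> real" where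
  "wt_i n f i = (if relevant n f i then 2 powr (- real (deg_i n f i)) else 0)"

definition weight :: "nat \<Rightarrow> (nat set \<Rightarrow> bool) \<Rightarrow> real" where
  "weight n f = (\<Sum>i<n. wt_i n f i)"

definition R_d :: "nat \<Rightarrow> ereal" where
  "R_d d = (SUP p\<in>{(n, f). bdeg n f \<le> d}. ereal (real (numrel (fst p) (snd p))))"

definition C_d :: "nat \<Rightarrow> ereal" where
  "C_d d = R_d d * ereal (2 powr (- real d))"

definition W_d :: "nat \<Rightarrow> ereal" where
  "W_d d = (SUP p\<in>{(n, f). bdeg n f \<le> d}. ereal (weight (fst p) (snd p)))"

end

theory Submission
  imports Defs "HOL-Library.Nat_Bijection"
begin

lemma prod_of_bool_real:
  "finite A \<Longrightarrow> (\<Prod>j\<in>A. (of_bool (P j)::real)) = of_bool (\<forall>j\<in>A. P j)"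
  by (induction A rule: finite_induct) auto

lemma prod_chi:
  "finite S \<Longrightarrow> (\<Prod>i\<in>S. (of_bool (i \<in> x)::real)) = of_bool (S \<subseteq> x)"
  by (subst prod_of_bool_real) auto

lemma fin_sub: "S \<subseteq> {..<(n::nat)} \<Longrightarrow> finite S"
  using finite_subset by blast

inductive pol :: "nat \<Rightarrow> nat \<Rightarrow> (nat set \<Rightarrow> real) \<Rightarrow> bool" for n d where
  mon: "S \<subseteq> {..<n} \<Longrightarrow> card S \<le> d \<Longrightarrow> pol n d (\<lambda>x. c * of_bool (S \<subseteq> x))"
| add: "pol n d h1 \<Longrightarrow> pol n d h2 \<Longrightarrow> pol n d (\<lambda>x. h1 x + h2 x)"

lemma pol_zero: "pol n d (\<lambda>x. 0)"
  using pol.mon[of "{}" n d 0] by simp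

lemma pol_const: "pol n d (\<lambda>x. c)"
  using pol.mon[of "{}" n d c] by simp

lemma pol_mono_deg: "pol n d h \<Longrightarrow> d \<le> d' \<Longrightarrow> pol n d' h"
  by (induction rule: pol.induct) (auto intro: pol.intros)

lemma pol_scale: "pol n d h \<Longrightarrow> pol n d (\<lambda>x. c * h x)"
proof (induction rule: pol.induct)
  case (mon S c')
  then show ?case using pol.mon[of S n d "c * c'"] by (simp add: mult.assoc)
next
  case (add h1 h2)
  then show ?case using pol.add[OF add.IH] by (simp add: distrib_left)
qed

lemma pol_mult_mon:
  assumes "pol n d2 h2" "S \<subseteq> {..<n}" "card S \<le> d1"
  shows "pol n (d1 + d2) (\<lambda>x. (c * of_bool (S \<subseteq> x)) * h2 x)"
  using assms(1)
proof (induction rule: pol.induct)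
  case (mon T c')
  have "card (S \<union> T) \<le> d1 + d2"
    using card_Un_le[of S T] mon assms by linarith
  then have "pol n (d1 + d2) (\<lambda>x. (c * c') * of_bool (S \<union> T \<subseteq> x))"
    using mon assms by (intro pol.mon) auto
  then show ?case by (simp add: mult_ac of_bool_conj)
next
  case (add h1 h2)
  then show ?case using pol.add[OF add.IH] by (simp add: distrib_left)
qed

lemma pol_mult:
  assumes "pol n d1 h1" "pol n d2 h2"
  shows "pol n (d1 + d2) (\<lambda>x. h1 x * h2 x)"
  using assms(1)
proof (induction rule: pol.induct)
  case (mon S c)
  then show ?case using pol_mult_mon[OF assms(2)] by simp
next
  case (add h1 h2)
  then show ?case using pol.add[OF add.IH] by (simp add: distrib_right)
qed

lemma pol_sum:
  "finite I \<Longrightarrow> (\<And>i. i \<in> I \<Longrightarrow> pol n d (h i)) \<Longrightarrow> pol n d (\<lambda>x. \<Sum>i\<in>I. h i x)"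
proof (induction I rule: finite_induct)
  case empty then show ?case by (simp add: pol_zero)
next
  case (insert a F)
  then show ?case using pol.add[of n d "h a" "\<lambda>x. \<Sum>i\<in>F. h i x"] by simp
qed

lemma pol_prod:
  "finite I \<Longrightarrow> (\<And>i. i \<in> I \<Longrightarrow> pol n (e i) (h i)) \<Longrightarrow> pol n (\<Sum>i\<in>I. e i) (\<lambda>x. \<Prod>i\<in>I. h i x)"
proof (induction I rule: finite_induct)
  case empty then show ?case by (simp add: pol_const)
next
  case (insert a F)
  then show ?case using pol_mult[of n "e a" "h a" "\<Sum>i\<in>F. e i" "\<lambda>x. \<Prod>i\<in>F. h i x"] by simp
qed

lemma pol_rep:
  assumes "pol n d h"
  shows "\<exists>a. (\<forall>S. \<not> S \<subseteq> {..<n} \<longrightarrow> a S = 0) \<and> (\<forall>S. d < card S \<longrightarrow> a S = 0) \<and>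
     (\<forall>x. h x = (\<Sum>S\<in>Pow {..<n}. a S * of_bool (S \<subseteq> x)))"
  using assms
proof (induction rule: pol.induct)
  case (mon S c)
  let ?a = "\<lambda>T. if T = S then c else 0"
  have "\<forall>x. c * of_bool (S \<subseteq> x) = (\<Sum>T\<in>Pow {..<n}. ?a T * of_bool (T \<subseteq> x))"
  proof
    fix x
    have "(\<Sum>T\<in>Pow {..<n}. ?a T * of_bool (T \<subseteq> x)) = (\<Sum>T\<in>Pow {..<n}. if T = S then c * of_bool (S \<subseteq> x) else 0)"
      by (rule sum.cong) auto
    also have "\<dots> = c * of_bool (S \<subseteq> x)" using mon by (subst sum.delta) auto
    finally show "c * of_bool (S \<subseteq> x) = (\<Sum>T\<in>Pow {..<n}. ?a T * of_bool (T \<subseteq> x))" by simp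
  qed
  then show ?case using mon by (intro exI[of _ ?a]) auto
next
  case (add h1 h2)
  then obtain a1 a2 where a1: "(\<forall>S. \<not> S \<subseteq> {..<n} \<longrightarrow> a1 S = 0) \<and> (\<forall>S. d < card S \<longrightarrow> a1 S = 0) \<and>
     (\<forall>x. h1 x = (\<Sum>S\<in>Pow {..<n}. a1 S * of_bool (S \<subseteq> x)))"
    and a2: "(\<forall>S. \<not> S \<subseteq> {..<n} \<longrightarrow> a2 S = 0) \<and> (\<forall>S. d < card S \<longrightarrow> a2 S = 0) \<and>
     (\<forall>x. h2 x = (\<Sum>S\<in>Pow {..<n}. a2 S * of_bool (S \<subseteq> x)))" by blast
  have "\<forall>x. h1 x + h2 x = (\<Sum>S\<in>Pow {..<n}. (a1 S + a2 S) * of_bool (S \<subseteq> x))"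
    using a1 a2 by (simp add: distrib_right sum.distrib)
  then show ?case using a1 a2 by (intro exI[of _ "\<lambda>S. a1 S + a2 S"]) simp
qed

lemma rep_unique0:
  fixes n :: nat
  assumes supp: "\<forall>S. \<not> S \<subseteq> {..<n} \<longrightarrow> a S = 0"
    and zero: "\<forall>x. x \<subseteq> {..<n} \<longrightarrow> (\<Sum>S\<in>Pow {..<n}. a S * of_bool (S \<subseteq> x)) = (0::real)"
  shows "a S = 0"
proof (induction "card S" arbitrary: S rule: less_induct)
  case less
  show ?case
  proof (cases "S \<subseteq> {..<n}")
    case False then show ?thesis using supp by auto
  next
    case True
    have fS: "finite S" using True by (rule fin_sub)
    have "(\<Sum>T\<in>Pow {..<n}. a T * of_bool (T \<subseteq> S)) = (\<Sum>T\<in>Pow {..<n}. if T = S then a S else 0)"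
    proof (rule sum.cong)
      fix T assume "T \<in> Pow {..<n}"
      show "a T * of_bool (T \<subseteq> S) = (if T = S then a S else 0)"
      proof (cases "T \<subseteq> S \<and> T \<noteq> S")
        case True
        then have "card T < card S" using fS by (intro psubset_card_mono) auto
        then have "a T = 0" using less(1) by blast
        then show ?thesis using True by simp
      next
        case False
        then show ?thesis by (cases "T = S") auto
      qed
    qed simp
    also have "\<dots> = a S" using True by (subst sum.delta) auto
    moreover have "(\<Sum>T\<in>Pow {..<n}. a T * of_bool (T \<subseteq> S)) = 0"
      using zero True by blast
    ultimately show ?thesis by simp
  qed
qed

definition RP :: "nat \<Rightarrow> (nat set \<Rightarrow> bool) \<Rightarrow> (nat set \<Rightarrow> real) \<Rightarrow> bool" where
  "RP n f a \<longleftrightarrow> (\<forall>S. \<not> S \<subseteq> {..<n} \<longrightarrow> a S = 0) \<and>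
      (\<forall>x. x \<subseteq> {..<n} \<longrightarrow> of_bool (f x) = (\<Sum>S\<in>Pow {..<n}. a S * of_bool (S \<subseteq> x)))"

lemma mcoeff_alt: "mcoeff n f = (THE a. RP n f a)"
proof -
  have *: "(\<Sum>S\<in>Pow {..<n}. a S * (\<Prod>i\<in>S. of_bool (i \<in> x))) =
     (\<Sum>S\<in>Pow {..<n}. a S * (of_bool (S \<subseteq> x)::real))" for a x
  proof (rule sum.cong)
    fix S assume "S \<in> Pow {..<n}"
    then have "finite S" by (auto intro: fin_sub)
    then show "a S * (\<Prod>i\<in>S. of_bool (i \<in> x)) = a S * (of_bool (S \<subseteq> x)::real)"
      by (simp add: prod_chi)
  qed simp
  show ?thesis unfolding mcoeff_def RP_def * by (rule refl)
qed

lemma RP_unique: "RP n f a \<Longrightarrow> RP n f b \<Longrightarrow> a = b"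
proof
  fix S assume A: "RP n f a" "RP n f b"
  have "(\<lambda>S. a S - b S) S = 0"
  proof (rule rep_unique0[of n])
    show "\<forall>S. \<not> S \<subseteq> {..<n} \<longrightarrow> a S - b S = 0" using A unfolding RP_def by auto
    show "\<forall>x. x \<subseteq> {..<n} \<longrightarrow> (\<Sum>S\<in>Pow {..<n}. (a S - b S) * of_bool (S \<subseteq> x)) = 0"
    proof (intro allI impI)
      fix x assume "x \<subseteq> {..<n}"
      then have "(\<Sum>S\<in>Pow {..<n}. a S * of_bool (S \<subseteq> x)) = (\<Sum>S\<in>Pow {..<n}. b S * of_bool (S \<subseteq> x))"
        using A unfolding RP_def by auto
      then show "(\<Sum>S\<in>Pow {..<n}. (a S - b S) * of_bool (S \<subseteq> x)) = 0"
        by (simp add: left_diff_distrib sum_subtractf)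
    qed
  qed
  then show "a S = b S" by simp
qed

lemma RP_exists: "\<exists>a. RP n f a"
proof -
  define ind where "ind T x = of_bool (T \<subseteq> x) * (\<Prod>j\<in>{..<n} - T. (of_bool (j \<notin> x)::real))" for T x
  have fac: "pol n 1 (\<lambda>x. of_bool (j \<notin> x))" if "j < n" for j
  proof -
    have "pol n 1 (\<lambda>x. 1 * of_bool ({} \<subseteq> x) + (-1) * of_bool ({j} \<subseteq> x))"
      using that by (intro pol.add pol.mon) auto
    moreover have "(\<lambda>x. 1 * of_bool ({} \<subseteq> x) + (-1) * of_bool ({j} \<subseteq> x)) = (\<lambda>x. of_bool (j \<notin> x) :: real)"
      by auto
    ultimately show ?thesis by simp
  qed
  have pind: "pol n (n + n) (ind T)" if "T \<subseteq> {..<n}" for T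
  proof -
    have m1: "pol n (card T) (\<lambda>x. 1 * of_bool (T \<subseteq> x))"
      using that by (intro pol.mon) auto
    have "pol n (card T + (\<Sum>j\<in>{..<n} - T. 1)) (ind T)"
      unfolding ind_def
      using pol_mult[OF m1 pol_prod[of "{..<n} - T" n "\<lambda>_. 1" "\<lambda>j x. of_bool (j \<notin> x)"]] fac by auto
    moreover have "card T + (\<Sum>j\<in>{..<n} - T. (1::nat)) \<le> n + n"
      using that card_mono[OF _ that] by (simp add: card_Diff_subset fin_sub)
    ultimately show ?thesis using pol_mono_deg by blast
  qed
  have "pol n (n + n) (\<lambda>x. \<Sum>T\<in>Pow {..<n}. of_bool (f T) * ind T x)"
    by (intro pol_sum pol_scale pind) auto
  then obtain a where a: "(\<forall>S. \<not> S \<subseteq> {..<n} \<longrightarrow> a S = 0)"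
    "\<forall>x. (\<Sum>T\<in>Pow {..<n}. of_bool (f T) * ind T x) = (\<Sum>S\<in>Pow {..<n}. a S * of_bool (S \<subseteq> x))"
    using pol_rep by blast
  have "of_bool (f x) = (\<Sum>T\<in>Pow {..<n}. of_bool (f T) * ind T x)" if x: "x \<subseteq> {..<n}" for x
  proof -
    have "(\<Sum>T\<in>Pow {..<n}. of_bool (f T) * ind T x) = (\<Sum>T\<in>Pow {..<n}. if T = x then of_bool (f x) else 0)"
    proof (rule sum.cong)
      fix T assume T: "T \<in> Pow {..<n}"
      have "ind T x = of_bool (T = x)"
        unfolding ind_def using T x by (subst prod_of_bool_real) auto
      then show "of_bool (f T) * ind T x = (if T = x then of_bool (f x) else 0)" by auto
    qed simp
    also have "\<dots> = of_bool (f x)" using x by (subst sum.delta) auto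
    finally show ?thesis by simp
  qed
  then have "RP n f a" unfolding RP_def using a by auto
  then show ?thesis by blast
qed

lemma mcoeff_RP: "RP n f (mcoeff n f)"
proof -
  have "\<exists>!a. RP n f a" using RP_exists RP_unique by blast
  from theI'[OF this] show ?thesis unfolding mcoeff_alt .
qed

lemma mcoeff_eq: "RP n f a \<Longrightarrow> mcoeff n f = a"
  using RP_unique mcoeff_RP by blast

lemma mcoeff_supp: "\<not> S \<subseteq> {..<n} \<Longrightarrow> mcoeff n f S = 0"
  using mcoeff_RP[of n f] unfolding RP_def by blast

lemma mcoeff_rep: "x \<subseteq> {..<n} \<Longrightarrow> of_bool (f x) = (\<Sum>S\<in>Pow {..<n}. mcoeff n f S * of_bool (S \<subseteq> x))"
  using mcoeff_RP[of n f] unfolding RP_def by blast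

lemma pol_mcoeff:
  assumes "pol n d h" "\<forall>x. x \<subseteq> {..<n} \<longrightarrow> h x = of_bool (g x)" "d < card S"
  shows "mcoeff n g S = 0"
proof -
  obtain a where a: "\<forall>S. \<not> S \<subseteq> {..<n} \<longrightarrow> a S = 0" "\<forall>S. d < card S \<longrightarrow> a S = 0"
     "\<forall>x. h x = (\<Sum>S\<in>Pow {..<n}. a S * of_bool (S \<subseteq> x))"
    using pol_rep[OF assms(1)] by blast
  have "RP n g a" unfolding RP_def using a assms(2) by auto
  then have "mcoeff n g = a" by (rule mcoeff_eq)
  then show ?thesis using a assms(3) by simp
qed

lemma fin_cards: "finite {card S | S. S \<subseteq> {..<(n::nat)} \<and> P S}"
  by (rule finite_subset[of _ "card ` Pow {..<n}"]) auto

lemma bdeg_le: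
  assumes "pol n d h" "\<forall>x. x \<subseteq> {..<n} \<longrightarrow> h x = of_bool (g x)"
  shows "bdeg n g \<le> d"
  unfolding bdeg_def
proof (subst Max_le_iff)
  show "finite (insert 0 {card S |S. S \<subseteq> {..<n} \<and> mcoeff n g S \<noteq> 0})"
    by (simp add: fin_cards)
  show "\<forall>a\<in>insert 0 {card S |S. S \<subseteq> {..<n} \<and> mcoeff n g S \<noteq> 0}. a \<le> d"
    using pol_mcoeff[OF assms] by (auto simp: not_less[symmetric])
qed simp

lemma card_le_bdeg: "S \<subseteq> {..<n} \<Longrightarrow> mcoeff n f S \<noteq> 0 \<Longrightarrow> card S \<le> bdeg n f"
  unfolding bdeg_def by (rule Max_ge) (use fin_cards in auto)

lemma card_le_degi: "S \<subseteq> {..<n} \<Longrightarrow> i \<in> S \<Longrightarrow> mcoeff n f S \<noteq> 0 \<Longrightarrow> card S \<le> deg_i n f i"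
  unfolding deg_i_def by (rule Max_ge) (use fin_cards in auto)

lemma degi_le_bdeg:
  assumes "relevant n f i" shows "deg_i n f i \<le> bdeg n f"
proof -
  let ?A = "{card S | S. S \<subseteq> {..<n} \<and> i \<in> S \<and> mcoeff n f S \<noteq> 0}"
  have "?A \<noteq> {}" using assms unfolding relevant_def by auto
  then have "Max ?A \<in> ?A" using fin_cards[of n "\<lambda>S. i \<in> S \<and> mcoeff n f S \<noteq> 0"]
    by (intro Max_in) auto
  then obtain S where "S \<subseteq> {..<n}" "mcoeff n f S \<noteq> 0" "deg_i n f i = card S"
    unfolding deg_i_def by auto
  then show ?thesis using card_le_bdeg by metis
qed

lemma sens_rel:
  assumes z: "z \<subseteq> {..<n}" and v: "v < n" and ne: "f z \<noteq> f (insert v z)"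
  shows "relevant n f v"
proof (rule ccontr)
  assume nr: "\<not> relevant n f v"
  have "(\<Sum>S\<in>Pow {..<n}. mcoeff n f S * of_bool (S \<subseteq> z)) =
        (\<Sum>S\<in>Pow {..<n}. mcoeff n f S * of_bool (S \<subseteq> insert v z))"
  proof (rule sum.cong)
    fix S assume S: "S \<in> Pow {..<n}"
    show "mcoeff n f S * of_bool (S \<subseteq> z) = mcoeff n f S * of_bool (S \<subseteq> insert v z)"
    proof (cases "v \<in> S")
      case True
      then have "mcoeff n f S = 0" using nr S unfolding relevant_def by auto
      then show ?thesis by simp
    next
      case False
      then have "(S \<subseteq> z) = (S \<subseteq> insert v z)" by (auto simp: subset_insert)
      then show ?thesis by simp
    qed
  qed simp
  moreover have "insert v z \<subseteq> {..<n}" using z v by auto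
  ultimately have "(of_bool (f z)::real) = of_bool (f (insert v z))"
    using mcoeff_rep[OF z, of f] mcoeff_rep[of "insert v z" n f] by simp
  then show False using ne by (cases "f z"; cases "f (insert v z)") auto
qed

lemma rel_sens:
  assumes rel: "relevant n f i"
  shows "\<exists>z\<subseteq>{..<n}. f (z - {i}) \<noteq> f (insert i z)"
proof (rule ccontr)
  assume H: "\<not> (\<exists>z\<subseteq>{..<n}. f (z - {i}) \<noteq> f (insert i z))"
  have fx: "f x = f (x - {i})" if x: "x \<subseteq> {..<n}" for x
  proof (cases "i \<in> x")
    case True
    then have "insert i x = x" by auto
    then show ?thesis using H x by metis
  qed simp
  define a' where "a' S = (if i \<in> S then 0 else mcoeff n f S)" for S
  have "RP n f a'"
    unfolding RP_def
  proof (intro conjI allI impI)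
    fix S assume "\<not> S \<subseteq> {..<n}" then show "a' S = 0" unfolding a'_def using mcoeff_supp by auto
  next
    fix x assume x: "x \<subseteq> {..<n}"
    have xi: "x - {i} \<subseteq> {..<n}" using x by auto
    have "(of_bool (f x)::real) = of_bool (f (x - {i}))" using fx[OF x] by simp
    also have "\<dots> = (\<Sum>S\<in>Pow {..<n}. mcoeff n f S * of_bool (S \<subseteq> x - {i}))" by (rule mcoeff_rep[OF xi])
    also have "\<dots> = (\<Sum>S\<in>Pow {..<n}. a' S * of_bool (S \<subseteq> x))"
      by (rule sum.cong) (auto simp: a'_def subset_Diff_insert)
    finally show "of_bool (f x) = (\<Sum>S\<in>Pow {..<n}. a' S * of_bool (S \<subseteq> x))" .
  qed
  then have eq: "mcoeff n f = a'" by (rule mcoeff_eq)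
  obtain S where S: "S \<subseteq> {..<n}" "i \<in> S" "mcoeff n f S \<noteq> 0" using rel unfolding relevant_def by blast
  have "mcoeff n f S = a' S" using eq by simp
  also have "\<dots> = 0" using S(2) unfolding a'_def by simp
  finally show False using S(3) by simp
qed

lemma pol_notin: "j < N \<Longrightarrow> pol N 1 (\<lambda>x. of_bool (j \<notin> x))"
proof -
  assume j: "j < N"
  have "pol N 1 (\<lambda>x. 1 * of_bool ({} \<subseteq> x) + (-1) * of_bool ({j} \<subseteq> x))"
    using j by (intro pol.add pol.mon) auto
  moreover have "(\<lambda>x. 1 * of_bool ({} \<subseteq> x) + (-1) * of_bool ({j} \<subseteq> x)) = (\<lambda>x. of_bool (j \<notin> x) :: real)"
    by auto
  ultimately show ?thesis by simp
qed

lemma pol_ind: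
  assumes b: "b \<subseteq> {..<T}" and T: "T \<le> N"
  shows "pol N T (\<lambda>x. of_bool (b \<subseteq> x) * (\<Prod>j\<in>{..<T} - b. (of_bool (j \<notin> x)::real)))"
proof -
  have m1: "pol N (card b) (\<lambda>x. 1 * of_bool (b \<subseteq> x))"
    using b T by (intro pol.mon) auto
  have "pol N (card b + (\<Sum>j\<in>{..<T} - b. 1)) (\<lambda>x. of_bool (b \<subseteq> x) * (\<Prod>j\<in>{..<T} - b. (of_bool (j \<notin> x)::real)))"
  proof -
    have fin: "finite ({..<T} - b)" by simp
    have "pol N (\<Sum>j\<in>{..<T} - b. 1) (\<lambda>x. \<Prod>j\<in>{..<T} - b. (of_bool (j \<notin> x)::real))"
      by (rule pol_prod[OF fin]) (use pol_notin T in auto)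
    from pol_mult[OF m1 this] show ?thesis by simp
  qed
  moreover have "card b + (\<Sum>j\<in>{..<T} - b. (1::nat)) = T"
    using b card_mono[OF _ b] finite_Diff[OF finite_lessThan[of T], of b] by (simp add: card_Diff_subset fin_sub)
  ultimately show ?thesis by simp
qed

lemma ind_eq:
  fixes T :: nat
  assumes b: "b \<subseteq> {..<T}"
  shows "of_bool (b \<subseteq> x) * (\<Prod>j\<in>{..<T} - b. (of_bool (j \<notin> x)::real)) = of_bool (x \<inter> {..<T} = b)"
  using b by (subst prod_of_bool_real) auto

lemma weight_R: "weight n f = (\<Sum>i\<in>{i. i < n \<and> relevant n f i}. 2 powr (- real (deg_i n f i)))"
proof -
  have "weight n f = (\<Sum>i\<in>{..<n}. if relevant n f i then 2 powr (- real (deg_i n f i)) else 0)"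
    unfolding weight_def wt_i_def by simp
  also have "\<dots> = (\<Sum>i\<in>{i\<in>{..<n}. relevant n f i}. 2 powr (- real (deg_i n f i)))"
    by (rule sum.inter_filter[symmetric]) simp
  also have "{i\<in>{..<n}. relevant n f i} = {i. i < n \<and> relevant n f i}" by auto
  finally show ?thesis .
qed

lemma lower:
  assumes deg: "bdeg n f \<le> d"
  shows "real (numrel n f) * 2 powr (- real d) \<le> weight n f"
proof -
  let ?R = "{i. i < n \<and> relevant n f i}"
  have "real (numrel n f) * 2 powr (- real d) = (\<Sum>i\<in>?R. 2 powr (- real d))"
    unfolding numrel_def by simp
  also have "\<dots> \<le> (\<Sum>i\<in>?R. 2 powr (- real (deg_i n f i)))"
  proof (rule sum_mono)
    fix i assume "i \<in> ?R"
    then have "deg_i n f i \<le> d" using degi_le_bdeg deg by fastforce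
    then show "2 powr (- real d) \<le> 2 powr (- real (deg_i n f i))" by (intro powr_mono) auto
  qed
  finally show ?thesis by (simp add: weight_R)
qed

lemma construct:
  assumes deg: "bdeg n f \<le> d"
  shows "\<exists>N g. bdeg N g \<le> d \<and> weight n f \<le> real (numrel N g) * 2 powr (- real d)"
proof -
  define c where "c = mcoeff n f"
  define t where "t i = d - deg_i n f i" for i
  define v where "v i p = d + prod_encode (i, set_encode p)" for i p
  define M where "M = Max (insert d ((\<lambda>(i,p). v i p) ` ({..<n} \<times> Pow {..<d})))"
  define N where "N = Suc M"
  define sub where "sub x = {i. i < n \<and> v i (x \<inter> {..<t i}) \<in> x}" for x
  define g where "g x = f (sub x)" for x
  define R where "R = {i. i < n \<and> relevant n f i}"
  define VS where "VS S b = (\<lambda>i. v i (b \<inter> {..<t i})) ` S" for S b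
  define ind where "ind (T::nat) b x = of_bool (b \<subseteq> x) * (\<Prod>j\<in>{..<T} - b. (of_bool (j \<notin> x)::real))" for T b x
  have t_le: "t i \<le> d" for i unfolding t_def by simp
  have v_ge: "d \<le> v i p" for i p unfolding v_def by simp
  have finM: "finite (insert d ((\<lambda>(i,p). v i p) ` ({..<n} \<times> Pow {..<d})))" by simp
  have v_lt: "v i p < N" if "i < n" "p \<subseteq> {..<d}" for i p
  proof -
    have "v i p \<le> M" unfolding M_def by (rule Max_ge[OF finM]) (use that in auto)
    then show ?thesis unfolding N_def by simp
  qed
  have "d \<le> M" unfolding M_def by (rule Max_ge[OF finM]) simp
  then have d_lt: "d < N" unfolding N_def by simp
  have v_inj1: "v i p = v j q \<Longrightarrow> i = j" for i j p q unfolding v_def by simp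
  have sub_sub: "sub x \<subseteq> {..<n}" for x unfolding sub_def by auto

  have key: "of_bool (S \<subseteq> sub x) = (\<Sum>b\<in>Pow {..<d - card S}. ind (d - card S) b x * of_bool (VS S b \<subseteq> x))"
    if S: "S \<subseteq> {..<n}" "c S \<noteq> 0" for S x
  proof -
    define T where "T = d - card S"
    have tT: "t i \<le> T" if "i \<in> S" for i
    proof -
      have "card S \<le> deg_i n f i" using card_le_degi[of S n i f] S that unfolding c_def by auto
      then show ?thesis unfolding t_def T_def by simp
    qed
    have "(\<Sum>b\<in>Pow {..<T}. ind T b x * of_bool (VS S b \<subseteq> x)) =
          (\<Sum>b\<in>Pow {..<T}. if b = x \<inter> {..<T} then of_bool (VS S (x \<inter> {..<T}) \<subseteq> x) else 0)"
    proof (rule sum.cong)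
      fix b assume "b \<in> Pow {..<T}"
      then have "ind T b x = of_bool (x \<inter> {..<T} = b)" unfolding ind_def by (intro ind_eq) auto
      then show "ind T b x * of_bool (VS S b \<subseteq> x) = (if b = x \<inter> {..<T} then of_bool (VS S (x \<inter> {..<T}) \<subseteq> x) else 0)"
        by auto
    qed simp
    also have "\<dots> = of_bool (VS S (x \<inter> {..<T}) \<subseteq> x)" by (subst sum.delta) auto
    also have "(VS S (x \<inter> {..<T}) \<subseteq> x) = (S \<subseteq> sub x)"
    proof -
      have "x \<inter> {..<T} \<inter> {..<t i} = x \<inter> {..<t i}" if "i \<in> S" for i using tT[OF that] by auto
      then show ?thesis unfolding VS_def sub_def using S(1) by auto
    qed
    finally show ?thesis unfolding T_def by simp
  qed
  define H where "H x = (\<Sum>S\<in>Pow {..<n}. c S * (\<Sum>b\<in>Pow {..<d - card S}. ind (d - card S) b x * of_bool (VS S b \<subseteq> x)))" for x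
  have Hg: "H x = of_bool (g x)" for x
  proof -
    have "(of_bool (g x)::real) = (\<Sum>S\<in>Pow {..<n}. c S * of_bool (S \<subseteq> sub x))"
      unfolding g_def c_def by (rule mcoeff_rep[OF sub_sub])
    also have "\<dots> = H x" unfolding H_def
    proof (rule sum.cong)
      fix S assume "S \<in> Pow {..<n}"
      then show "c S * of_bool (S \<subseteq> sub x) = c S * (\<Sum>b\<in>Pow {..<d - card S}. ind (d - card S) b x * of_bool (VS S b \<subseteq> x))"
        using key[of S x] by (cases "c S = 0") auto
    qed simp
    finally show ?thesis by simp
  qed
  have polH: "pol N d H" unfolding H_def
  proof (rule pol_sum)
    fix S assume S: "S \<in> Pow {..<n}"
    show "pol N d (\<lambda>x. c S * (\<Sum>b\<in>Pow {..<d - card S}. ind (d - card S) b x * of_bool (VS S b \<subseteq> x)))"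
    proof (cases "c S = 0")
      case True then show ?thesis using pol_zero by simp
    next
      case False
      have cS: "card S \<le> d" using card_le_bdeg[of S n f] S False deg unfolding c_def by auto
      have "pol N (d - card S + card S) (\<lambda>x. \<Sum>b\<in>Pow {..<d - card S}. ind (d - card S) b x * of_bool (VS S b \<subseteq> x))"
      proof (rule pol_sum)
        fix b assume b: "b \<in> Pow {..<d - card S}"
        have p1: "pol N (d - card S) (ind (d - card S) b)"
          unfolding ind_def using b d_lt by (intro pol_ind) auto
        have VSsub: "VS S b \<subseteq> {..<N}" unfolding VS_def using S b by (auto intro!: v_lt)
        have "card (VS S b) \<le> card S" unfolding VS_def by (rule card_image_le) (use S fin_sub in auto)
        then have p2: "pol N (card S) (\<lambda>x. 1 * of_bool (VS S b \<subseteq> x))" using VSsub by (intro pol.mon) auto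
        show "pol N (d - card S + card S) (\<lambda>x. ind (d - card S) b x * of_bool (VS S b \<subseteq> x))"
          using pol_mult[OF p1 p2] by simp
      qed simp
      then show ?thesis using cS by (intro pol_scale) simp
    qed
  qed simp
  have degg: "bdeg N g \<le> d" by (rule bdeg_le[OF polH]) (simp add: Hg)

  have relcopy: "relevant N g (v i p)" if i: "i \<in> R" and p: "p \<subseteq> {..<t i}" for i p
  proof -
    have "relevant n f i" "i < n" using i unfolding R_def by auto
    then obtain z where z: "z \<subseteq> {..<n}" "f (z - {i}) \<noteq> f (insert i z)" using rel_sens by blast
    define x0 where "x0 = p \<union> (\<lambda>j. v j (p \<inter> {..<t j})) ` (z - {i})"
    have pd: "p \<subseteq> {..<d}" using p t_le[of i] by auto
    have cut0: "x0 \<inter> {..<t j} = p \<inter> {..<t j}" for j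
    proof -
      have nl: "y \<notin> {..<t j}" if yin: "y \<in> (\<lambda>k. v k (p \<inter> {..<t k})) ` (z - {i})" for y
      proof -
        obtain k where "y = v k (p \<inter> {..<t k})" using yin by blast
        then have "d \<le> y" using v_ge by simp
        then show ?thesis using t_le[of j] by simp
      qed
      show ?thesis unfolding x0_def using nl by blast
    qed
    have cut1: "insert (v i p) x0 \<inter> {..<t j} = p \<inter> {..<t j}" for j
      using cut0[of j] v_ge[of i p] t_le[of j] by auto
    have notp: "v j q \<notin> p" for j q using pd v_ge[of j q] by auto
    have pi: "p \<inter> {..<t i} = p" using p by auto
    have s0: "sub x0 = z - {i}"
    proof (rule set_eqI)
      fix j
      show "j \<in> sub x0 \<longleftrightarrow> j \<in> z - {i}"
        unfolding sub_def cut0 using notp z(1) unfolding x0_def by (auto dest: v_inj1)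
    qed
    have s1: "sub (insert (v i p) x0) = insert i z"
    proof (rule set_eqI)
      fix j
      show "j \<in> sub (insert (v i p) x0) \<longleftrightarrow> j \<in> insert i z"
        unfolding sub_def cut1 using notp z(1) \<open>i < n\<close> pi unfolding x0_def by (auto dest: v_inj1)
    qed
    have x0N: "x0 \<subseteq> {..<N}" unfolding x0_def using pd d_lt z(1) by (auto intro!: v_lt)
    have "g x0 \<noteq> g (insert (v i p) x0)" unfolding g_def s0 s1 using z(2) .
    then show ?thesis using sens_rel[OF x0N v_lt[OF \<open>i < n\<close> pd]] by blast
  qed
  define copies where "copies = Sigma R (\<lambda>i. Pow {..<t i})"
  have finR: "finite R" unfolding R_def by simp
  have inj: "inj_on (\<lambda>(i,p). v i p) copies"
  proof (rule inj_onI)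
    fix a b assume a: "a \<in> copies" and b: "b \<in> copies" and eq: "(\<lambda>(i,p). v i p) a = (\<lambda>(i,p). v i p) b"
    obtain i p where ip: "a = (i, p)" "p \<subseteq> {..<t i}" using a unfolding copies_def by auto
    obtain j q where jq: "b = (j, q)" "q \<subseteq> {..<t j}" using b unfolding copies_def by auto
    have "i = j" "set_encode p = set_encode q" using eq ip jq unfolding v_def by auto
    moreover have "finite p" "finite q" using ip jq fin_sub by auto
    ultimately show "a = b" using ip jq set_encode_eq by auto
  qed
  have img: "(\<lambda>(i,p). v i p) ` copies \<subseteq> {j. j < N \<and> relevant N g j}"
  proof
    fix y assume "y \<in> (\<lambda>(i,p). v i p) ` copies"
    then obtain i p where ip: "i \<in> R" "p \<subseteq> {..<t i}" "y = v i p" unfolding copies_def by auto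
    have "p \<subseteq> {..<d}" using ip(2) t_le[of i] by auto
    moreover have "i < n" using ip(1) unfolding R_def by auto
    ultimately show "y \<in> {j. j < N \<and> relevant N g j}" using ip relcopy v_lt by auto
  qed
  have "card copies \<le> numrel N g"
  proof -
    have "card copies = card ((\<lambda>(i,p). v i p) ` copies)" using card_image[OF inj] by simp
    also have "\<dots> \<le> card {j. j < N \<and> relevant N g j}" by (rule card_mono[OF _ img]) simp
    finally show ?thesis unfolding numrel_def .
  qed
  moreover have cc: "card copies = (\<Sum>i\<in>R. 2 ^ t i)"
    unfolding copies_def using finR by (simp add: card_SigmaI card_Pow)
  moreover have "weight n f = (\<Sum>i\<in>R. 2 ^ t i) * 2 powr (- real d)"
  proof -
    have "weight n f = (\<Sum>i\<in>R. 2 powr (- real (deg_i n f i)))" unfolding weight_R R_def ..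
    also have "\<dots> = (\<Sum>i\<in>R. 2 ^ t i * 2 powr (- real d))"
    proof (rule sum.cong)
      fix i assume "i \<in> R"
      then have dd: "deg_i n f i \<le> d" using degi_le_bdeg deg unfolding R_def by fastforce
      have "(2::real) ^ t i = 2 powr (real d - real (deg_i n f i))"
        unfolding t_def using dd by (simp add: powr_realpow[symmetric] of_nat_diff)
      then show "2 powr (- real (deg_i n f i)) = 2 ^ t i * 2 powr (- real d)"
        by (simp add: powr_add[symmetric])
    qed simp
    finally show ?thesis by (simp add: sum_distrib_right)
  qed
  ultimately have "weight n f = real (card copies) * 2 powr (- real d)" "card copies \<le> numrel N g"
    by simp_all
  then have "weight n f \<le> real (numrel N g) * 2 powr (- real d)"
    by (simp add: mult_right_mono)
  then show ?thesis using degg by blast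
qed

theorem proposition1:
  fixes d :: nat
  assumes "d \<ge> 1"
  shows "C_d d = W_d d"
proof -
  let ?A = "{(n, f). bdeg n f \<le> d}"
  let ?c = "2 powr (- real d)"
  have "bdeg 0 (\<lambda>_. False) \<le> 0" by (rule bdeg_le[OF pol_zero]) simp
  then have "(0, \<lambda>_. False) \<in> ?A" by simp
  then have ne: "?A \<noteq> {}" by blast
  have "C_d d = (SUP p\<in>?A. ereal (real (numrel (fst p) (snd p))) * ereal ?c)"
    unfolding C_d_def R_d_def by (rule Sup_ereal_mult_right'[OF ne]) simp
  also have "\<dots> = W_d d" unfolding W_d_def
  proof (rule antisym)
    show "(SUP p\<in>?A. ereal (real (numrel (fst p) (snd p))) * ereal ?c) \<le> (SUP p\<in>?A. ereal (weight (fst p) (snd p)))"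
    proof (rule SUP_mono)
      fix p assume "p \<in> ?A"
      then have "real (numrel (fst p) (snd p)) * ?c \<le> weight (fst p) (snd p)" using lower by (cases p) auto
      then show "\<exists>q\<in>?A. ereal (real (numrel (fst p) (snd p))) * ereal ?c \<le> ereal (weight (fst q) (snd q))"
        using \<open>p \<in> ?A\<close> by (intro bexI[of _ p]) auto
    qed
    show "(SUP p\<in>?A. ereal (weight (fst p) (snd p))) \<le> (SUP p\<in>?A. ereal (real (numrel (fst p) (snd p))) * ereal ?c)"
    proof (rule SUP_mono)
      fix p assume "p \<in> ?A"
      then obtain N g where "bdeg N g \<le> d" "weight (fst p) (snd p) \<le> real (numrel N g) * ?c"
        using construct by (cases p) force
      then show "\<exists>q\<in>?A. ereal (weight (fst p) (snd p)) \<le> ereal (real (numrel (fst q) (snd q))) * ereal ?c"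
        by (intro bexI[of _ "(N, g)"]) auto
    qed
  qed
  finally show ?thesis .
qed

end
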